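(* Let $n\ge1$ and let $(f_3,\pi_1,\pi_2)$ be a triple where $f_3$ is a pairing of $[n]\cup[\hat n]$, $\pi_1,\pi_2$ are set partitions of $[n]\cup[\hat n]$ with blocks of even size, $\pi_1$ stable by $f_1$ and $f_3$, and $\pi_2$ stable by $f_2$ and $f_3$. Consider the graph whose vertices are the blocks of $\pi_1$ ("white") and the blocks of $\pi_2$ ("black"), in which: each black block $B$ is joined as a child to the white block containing the maximum hat number of $B$; and each white block $W$ not containing $1$ is joined as a child to the black block containing the maximum non-hat number of $W$. Then this parent/child structure is a tree rooted at the white block containing $1$.
   Context: The ground set is $[n]\cup[\hat n]=\{1,\dots,n,\hat1,\dots,\hat n\}$, with non-hat numbers ordered $1<2<\dots<n$ and hat numbers ordered $\hat1<\hat2<\dots<\hat n$. A pairing is a fixed-point-free involution. $f_1=(1\,\hat n)(2\,\hat1)(3\,\hat2)\cdots(n\,\widehat{n-1})$ and $f_2=(1\,\hat1)(2\,\hat2)\cdots(n\,\hat n)$. A set partition is stable by a permutation $f$ if $f$ maps each block onto itself. *)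

theory Defs
  imports Main "HOL-Library.Disjoint_Sets"
begin

text \<open>Points of the ground set: N i is the non-hat number i, H i is the hat number \<hat>i.\<close>
datatype pt = N nat | H nat

definition ground :: "nat \<Rightarrow> pt set" where
  "ground n = N ` {1..n} \<union> H ` {1..n}"

fun f1 :: "nat \<Rightarrow> pt \<Rightarrow> pt" where
  "f1 n (N i) = (if i = 1 then H n else H (i - 1))"
| "f1 n (H i) = (if i = n then N 1 else N (i + 1))"

fun f2 :: "pt \<Rightarrow> pt" where
  "f2 (N i) = H i"
| "f2 (H i) = N i"

definition is_pairing :: "nat \<Rightarrow> (pt \<Rightarrow> pt) \<Rightarrow> bool" where
  "is_pairing n f \<longleftrightarrow>
     (\<forall>x\<in>ground n. f x \<in> ground n \<and> f (f x) = x \<and> f x \<noteq> x)"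

definition stable_by :: "(pt \<Rightarrow> pt) \<Rightarrow> pt set set \<Rightarrow> bool" where
  "stable_by f P \<longleftrightarrow> (\<forall>B\<in>P. f ` B = B)"

definition even_blocks :: "pt set set \<Rightarrow> bool" where
  "even_blocks P \<longleftrightarrow> (\<forall>B\<in>P. even (card B))"

definition max_hat :: "pt set \<Rightarrow> nat" where
  "max_hat B = Max {i. H i \<in> B}"

definition max_nonhat :: "pt set \<Rightarrow> nat" where
  "max_nonhat B = Max {i. N i \<in> B}"

definition block_of :: "pt set set \<Rightarrow> pt \<Rightarrow> pt set" where
  "block_of P x = (THE B. B \<in> P \<and> x \<in> B)"

text \<open>Vertices: Inl W for white blocks (of \<pi>1), Inr B for black blocks (of \<pi>2).\<close>
definition tree_vertices :: "pt set set \<Rightarrow> pt set set \<Rightarrow> (pt set + pt set) set" where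
  "tree_vertices \<pi>1 \<pi>2 = Inl ` \<pi>1 \<union> Inr ` \<pi>2"

definition child_parent :: "pt set set \<Rightarrow> pt set set \<Rightarrow> ((pt set + pt set) \<times> (pt set + pt set)) set" where
  "child_parent \<pi>1 \<pi>2 =
     {(Inr B, Inl (block_of \<pi>1 (H (max_hat B)))) | B. B \<in> \<pi>2} \<union>
     {(Inl W, Inr (block_of \<pi>2 (N (max_nonhat W)))) | W. W \<in> \<pi>1 \<and> N 1 \<notin> W}"

definition tree_root :: "pt set set \<Rightarrow> pt set + pt set" where
  "tree_root \<pi>1 = Inl (block_of \<pi>1 (N 1))"

end

theory Submission
  imports Defs
begin

lemma block_of_eq:
  assumes "partition_on A P" "B \<in> P" "x \<in> B"
  shows "block_of P x = B"
  unfolding block_of_def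
proof (rule the_equality)
  show "B \<in> P \<and> x \<in> B" using assms by auto
  fix C assume "C \<in> P \<and> x \<in> C"
  then show "C = B" using assms partition_onD2[OF assms(1)]
    by (meson disjointD disjoint_iff)
qed

lemma block_of_mem:
  assumes "partition_on A P" "x \<in> A"
  shows "block_of P x \<in> P \<and> x \<in> block_of P x"
proof -
  obtain B where "B \<in> P" "x \<in> B" using assms partition_onD1[OF assms(1)] by auto
  then show ?thesis using block_of_eq[OF assms(1)] by simp
qed

lemma sub_ground:
  assumes "partition_on (ground n) P" "B \<in> P"
  shows "B \<subseteq> ground n"
  using assms partition_onD1 by blast

lemma hat_fin: "B \<subseteq> ground n \<Longrightarrow> {i. H i \<in> B} \<subseteq> {1..n}"
  unfolding ground_def by auto

lemma nonhat_fin: "B \<subseteq> ground n \<Longrightarrow> {i. N i \<in> B} \<subseteq> {1..n}"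
  unfolding ground_def by auto

lemma max_hat_props:
  assumes "B \<subseteq> ground n" "H j \<in> B"
  shows "H (max_hat B) \<in> B \<and> j \<le> max_hat B \<and> 1 \<le> max_hat B \<and> max_hat B \<le> n"
proof -
  have f: "finite {i. H i \<in> B}" using hat_fin[OF assms(1)] finite_subset by blast
  have "max_hat B \<in> {i. H i \<in> B}" unfolding max_hat_def
    using f assms(2) by (intro Max_in) auto
  moreover have "j \<le> max_hat B" unfolding max_hat_def using f assms(2) by simp
  ultimately show ?thesis using hat_fin[OF assms(1)] by auto
qed

lemma max_nonhat_props:
  assumes "B \<subseteq> ground n" "N j \<in> B"
  shows "N (max_nonhat B) \<in> B \<and> j \<le> max_nonhat B \<and> 1 \<le> max_nonhat B \<and> max_nonhat B \<le> n"
proof -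
  have f: "finite {i. N i \<in> B}" using nonhat_fin[OF assms(1)] finite_subset by blast
  have "max_nonhat B \<in> {i. N i \<in> B}" unfolding max_nonhat_def
    using f assms(2) by (intro Max_in) auto
  moreover have "j \<le> max_nonhat B" unfolding max_nonhat_def using f assms(2) by simp
  ultimately show ?thesis using nonhat_fin[OF assms(1)] by auto
qed

lemma ground_N: "1 \<le> i \<Longrightarrow> i \<le> n \<Longrightarrow> N i \<in> ground n" unfolding ground_def by auto
lemma ground_H: "1 \<le> i \<Longrightarrow> i \<le> n \<Longrightarrow> H i \<in> ground n" unfolding ground_def by auto

theorem lemma3:
  fixes n :: nat and f3 :: "pt \<Rightarrow> pt" and \<pi>1 \<pi>2 :: "pt set set"
  assumes "n \<ge> 1"
    and "is_pairing n f3"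
    and "partition_on (ground n) \<pi>1" and "partition_on (ground n) \<pi>2"
    and "even_blocks \<pi>1" and "even_blocks \<pi>2"
    and "stable_by (f1 n) \<pi>1" and "stable_by f3 \<pi>1"
    and "stable_by f2 \<pi>2" and "stable_by f3 \<pi>2"
  shows "tree_root \<pi>1 \<in> tree_vertices \<pi>1 \<pi>2
       \<and> child_parent \<pi>1 \<pi>2 \<subseteq> tree_vertices \<pi>1 \<pi>2 \<times> tree_vertices \<pi>1 \<pi>2
       \<and> (\<forall>v\<in>tree_vertices \<pi>1 \<pi>2. (v, tree_root \<pi>1) \<in> (child_parent \<pi>1 \<pi>2)\<^sup>*)"
proof -
  note P1 = assms(3) and P2 = assms(4)
  have st1: "\<And>W x. W \<in> \<pi>1 \<Longrightarrow> x \<in> W \<Longrightarrow> f1 n x \<in> W"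
    using assms(7) unfolding stable_by_def by blast
  have st2: "\<And>B x. B \<in> \<pi>2 \<Longrightarrow> x \<in> B \<Longrightarrow> f2 x \<in> B"
    using assms(9) unfolding stable_by_def by blast
  let ?R = "child_parent \<pi>1 \<pi>2"
  let ?r = "tree_root \<pi>1"
  have root_mem: "?r \<in> tree_vertices \<pi>1 \<pi>2"
    unfolding tree_root_def tree_vertices_def
    using block_of_mem[OF P1 ground_N[OF order_refl assms(1)]] by auto
  have blackH: "\<And>B. B \<in> \<pi>2 \<Longrightarrow> \<exists>j. H j \<in> B"
  proof -
    fix B assume B: "B \<in> \<pi>2"
    then obtain x where "x \<in> B" using partition_onD3[OF P2] by fastforce
    then show "\<exists>j. H j \<in> B" using st2[OF B] by (cases x) force+
  qed
  have whiteN: "\<And>W. W \<in> \<pi>1 \<Longrightarrow> \<exists>j. N j \<in> W"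
  proof -
    fix W assume W: "W \<in> \<pi>1"
    then obtain x where "x \<in> W" using partition_onD3[OF P1] by fastforce
    then show "\<exists>j. N j \<in> W" using st1[OF W, of x]
      by (cases x) (auto split: if_splits)
  qed
  have Nroot: "\<And>W. W \<in> \<pi>1 \<Longrightarrow> N 1 \<in> W \<Longrightarrow> Inl W = ?r"
    unfolding tree_root_def using block_of_eq[OF P1] by metis
  have black: "\<And>B. B \<in> \<pi>2 \<Longrightarrow> (Inr B, ?r) \<in> ?R\<^sup>*"
  proof -
    fix B0 assume "B0 \<in> \<pi>2"
    then show "(Inr B0, ?r) \<in> ?R\<^sup>*"
    proof (induction "n - max_hat B0" arbitrary: B0 rule: less_induct)
      case less
      note B = less.prems
      define m where "m = max_hat B0"
      obtain j where "H j \<in> B0" using blackH[OF B] by blast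
      then have mp: "H m \<in> B0 \<and> 1 \<le> m \<and> m \<le> n"
        using max_hat_props[OF sub_ground[OF P2 B]] m_def by blast
      define W where "W = block_of \<pi>1 (H m)"
      have W: "W \<in> \<pi>1 \<and> H m \<in> W" unfolding W_def
        using block_of_mem[OF P1 ground_H] mp by blast
      have e1: "(Inr B0, Inl W) \<in> ?R" unfolding child_parent_def W_def m_def
        using B by blast
      show ?case
      proof (cases "N 1 \<in> W")
        case True
        then show ?thesis using e1 Nroot W by auto
      next
        case False
        have "m \<noteq> n" using st1[of W "H m"] W False by auto
        then have "N (m+1) \<in> W" using st1[of W "H m"] W by auto
        define k where "k = max_nonhat W"
        have kp: "N k \<in> W \<and> m + 1 \<le> k \<and> 1 \<le> k \<and> k \<le> n"
          using max_nonhat_props[OF sub_ground[OF P1] \<open>N (m+1) \<in> W\<close>] W k_def by blast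
        define B' where "B' = block_of \<pi>2 (N k)"
        have B': "B' \<in> \<pi>2 \<and> N k \<in> B'" unfolding B'_def
          using block_of_mem[OF P2 ground_N] kp by blast
        have "H k \<in> B'" using st2[of B' "N k"] B' by simp
        then have "k \<le> max_hat B' \<and> max_hat B' \<le> n"
          using max_hat_props[OF sub_ground[OF P2] ] B' by blast
        then have lt: "n - max_hat B' < n - max_hat B0" using kp mp m_def by linarith
        have e2: "(Inl W, Inr B') \<in> ?R" unfolding child_parent_def B'_def k_def
          using W False by blast
        have "(Inr B', ?r) \<in> ?R\<^sup>*" using less.hyps[OF lt] B' by blast
        then show ?thesis using e1 e2
          by (meson converse_rtrancl_into_rtrancl)
      qed
    qed
  qed
  have white: "\<And>W. W \<in> \<pi>1 \<Longrightarrow> (Inl W, ?r) \<in> ?R\<^sup>*"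
  proof -
    fix W assume W: "W \<in> \<pi>1"
    show "(Inl W, ?r) \<in> ?R\<^sup>*"
    proof (cases "N 1 \<in> W")
      case True then show ?thesis using Nroot W by auto
    next
      case False
      obtain j where "N j \<in> W" using whiteN[OF W] by blast
      then have kp: "N (max_nonhat W) \<in> W \<and> 1 \<le> max_nonhat W \<and> max_nonhat W \<le> n"
        using max_nonhat_props[OF sub_ground[OF P1 W]] by blast
      define B' where "B' = block_of \<pi>2 (N (max_nonhat W))"
      have B': "B' \<in> \<pi>2" unfolding B'_def
        using block_of_mem[OF P2 ground_N] kp by blast
      have e2: "(Inl W, Inr B') \<in> ?R" unfolding child_parent_def B'_def
        using W False by blast
      then show ?thesis using black[OF B'] by (meson converse_rtrancl_into_rtrancl)
    qed
  qed
  have sub: "?R \<subseteq> tree_vertices \<pi>1 \<pi>2 \<times> tree_vertices \<pi>1 \<pi>2"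
  proof
    fix e assume "e \<in> ?R"
    then consider (a) B where "B \<in> \<pi>2" "e = (Inr B, Inl (block_of \<pi>1 (H (max_hat B))))"
      | (b) W where "W \<in> \<pi>1" "N 1 \<notin> W" "e = (Inl W, Inr (block_of \<pi>2 (N (max_nonhat W))))"
      unfolding child_parent_def by blast
    then show "e \<in> tree_vertices \<pi>1 \<pi>2 \<times> tree_vertices \<pi>1 \<pi>2"
    proof cases
      case a
      obtain j where "H j \<in> B" using blackH[OF a(1)] by blast
      then have "1 \<le> max_hat B \<and> max_hat B \<le> n"
        using max_hat_props[OF sub_ground[OF P2 a(1)]] by blast
      then show ?thesis using a block_of_mem[OF P1 ground_H] unfolding tree_vertices_def by auto
    next
      case b
      obtain j where "N j \<in> W" using whiteN[OF b(1)] by blast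
      then have "1 \<le> max_nonhat W \<and> max_nonhat W \<le> n"
        using max_nonhat_props[OF sub_ground[OF P1 b(1)]] by blast
      then show ?thesis using b block_of_mem[OF P2 ground_N] unfolding tree_vertices_def by auto
    qed
  qed
  show ?thesis using root_mem sub white black unfolding tree_vertices_def by blast
qed

end
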